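(* Let $\mathcal I,\mathcal J$ be ideals on $\omega$. Then (1) $\mathfrak b_s(\mathcal I\otimes\mathcal J)=\mathfrak b_s(\mathcal I)$; (2) $\mathfrak b_\sigma(\mathcal I\otimes\mathcal J)=\min\{\mathfrak b_\sigma(\mathcal I),\mathfrak b_\sigma(\mathcal J)\}$; (3) $\mathrm{add}_\omega(\mathcal I\otimes\mathcal J)\le\min\{\mathrm{add}_\omega(\mathcal I),\mathrm{add}_\omega(\mathcal J)\}$.
   Context: An ideal on a countably infinite set $S$ is a family of subsets of $S$ closed under finite unions and subsets, containing all finite sets, not containing $S$. $\mathcal I\otimes\mathcal J=\{A\subseteq\omega\times\omega:\{x\in\omega:\{y:(x,y)\in A\}\notin\mathcal J\}\in\mathcal I\}$, an ideal on $\omega\times\omega$. Convention: $\min\emptyset=\infty$, $\kappa<\infty$ for every cardinal. For an ideal $\mathcal I$ on a countably infinite set $S$: $\widehat{\mathcal P}_{\mathcal I}$ = sequences $(A_n)_{n\in\omega}\in\mathcal I^\omega$ of pairwise disjoint sets; $\mathcal P_{\mathcal I}$ = those with $\bigcup_nA_n=S$; $\mathcal M_{\mathcal I}$ = sequences $(E_k)_{k\in\omega}\in\mathcal I^\omega$ with $E_k\subseteq E_{k+1}$. $\mathfrak b_s(\mathcal I)=\min\{|\mathcal E|:\mathcal E\subseteq\widehat{\mathcal P}_{\mathcal I}$ and for every $(A_n)\in\mathcal P_{\mathcal I}$ there is $(E_n)\in\mathcal E$ with $\bigcup_n(A_{n+1}\cap\bigcup_{i\le n}E_i)\notin\mathcal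 I\}$; $\mathfrak b_\sigma(\mathcal I)=\min\{|\mathcal E|:\mathcal E\subseteq\mathcal M_{\mathcal I}$ and for every $(A_n)\in\mathcal M_{\mathcal I}$ there is $(E_n)\in\mathcal E$ with $E_n\not\subseteq A_n$ for infinitely many $n\}$; $\mathrm{add}_\omega(\mathcal I)=\min\{|\mathcal A|:\mathcal A\subseteq\mathcal I$ and for every $(B_n)\in\mathcal I^\omega$ there is $A\in\mathcal A$ with $A\not\subseteq B_n$ for all $n\}$. *)

theory Defs
  imports Main
begin

text \<open>An ideal on the countably infinite carrier UNIV (of type 'a; used with
  'a = nat for omega and 'a = nat \<times> nat for omega \<times> omega).\<close>
definition is_ideal :: "'a set set \<Rightarrow> bool" where
  "is_ideal I \<longleftrightarrow>
     (\<forall>A\<in>I. \<forall>B\<in>I. A \<union> B \<in> I) \<and>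
     (\<forall>A\<in>I. \<forall>B. B \<subseteq> A \<longrightarrow> B \<in> I) \<and>
     (\<forall>F. finite F \<longrightarrow> F \<in> I) \<and>
     UNIV \<notin> I"

definition ideal_prod :: "'a set set \<Rightarrow> 'b set set \<Rightarrow> ('a \<times> 'b) set set" where
  "ideal_prod I J = {A. {x. {y. (x, y) \<in> A} \<notin> J} \<in> I}"

definition hatP :: "'a set set \<Rightarrow> (nat \<Rightarrow> 'a set) set" where
  "hatP I = {A. (\<forall>n. A n \<in> I) \<and> (\<forall>m n. m \<noteq> n \<longrightarrow> A m \<inter> A n = {})}"

definition partP :: "'a set set \<Rightarrow> (nat \<Rightarrow> 'a set) set" where
  "partP I = {A \<in> hatP I. (\<Union>n. A n) = UNIV}"

definition incM :: "'a set set \<Rightarrow> (nat \<Rightarrow> 'a set) set" where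
  "incM I = {E. (\<forall>k. E k \<in> I) \<and> (\<forall>k. E k \<subseteq> E (Suc k))}"

text \<open>Families over which the minima defining the invariants are taken.\<close>
definition bs_fams :: "'a set set \<Rightarrow> (nat \<Rightarrow> 'a set) set set" where
  "bs_fams I = {\<E>. \<E> \<subseteq> hatP I \<and>
     (\<forall>A\<in>partP I. \<exists>E\<in>\<E>. (\<Union>n. A (Suc n) \<inter> (\<Union>i\<le>n. E i)) \<notin> I)}"

definition bsigma_fams :: "'a set set \<Rightarrow> (nat \<Rightarrow> 'a set) set set" where
  "bsigma_fams I = {\<E>. \<E> \<subseteq> incM I \<and>
     (\<forall>A\<in>incM I. \<exists>E\<in>\<E>. infinite {n. \<not> E n \<subseteq> A n})}"

definition addw_fams :: "'a set set \<Rightarrow> 'a set set set" where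
  "addw_fams I = {\<A>. \<A> \<subseteq> I \<and>
     (\<forall>B. (\<forall>n::nat. B n \<in> I) \<longrightarrow> (\<exists>A\<in>\<A>. \<forall>n. \<not> A \<subseteq> B n))}"

text \<open>minc W1 \<le> minc W2, where minc W = min {|X| : X \<in> W} (a cardinal, with
  min of the empty set = \<infinity> > every cardinal). Since cardinals are well
  ordered, this holds iff every member of W2 has cardinality at least that of
  some member of W1. |_| is card_of, \<le>o the cardinal order.\<close>
definition minc_le :: "'a set set \<Rightarrow> 'b set set \<Rightarrow> bool" where
  "minc_le W1 W2 \<longleftrightarrow> (\<forall>B\<in>W2. \<exists>A\<in>W1. (card_of A, card_of B) \<in> ordLeq)"

definition minc_eq :: "'a set set \<Rightarrow> 'b set set \<Rightarrow> bool" where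
  "minc_eq W1 W2 \<longleftrightarrow> minc_le W1 W2 \<and> minc_le W2 W1"

end

theory Submission imports Defs begin

definition sec :: "('a \<times> 'b) set \<Rightarrow> 'a \<Rightarrow> 'b set" where
  "sec P x = {y. (x, y) \<in> P}"

lemma idI: assumes "is_ideal I" shows
  id_un: "A \<in> I \<Longrightarrow> B \<in> I \<Longrightarrow> A \<union> B \<in> I" and
  id_sub: "A \<in> I \<Longrightarrow> B \<subseteq> A \<Longrightarrow> B \<in> I" and
  id_fin: "finite F \<Longrightarrow> F \<in> I" and
  id_univ: "UNIV \<notin> I"
  using assms unfolding is_ideal_def by blast+

lemma id_sup: "is_ideal I \<Longrightarrow> A \<notin> I \<Longrightarrow> A \<subseteq> B \<Longrightarrow> B \<notin> I"
  using id_sub by blast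

lemma id_compl: "is_ideal I \<Longrightarrow> A \<in> I \<Longrightarrow> - A \<notin> I"
  using id_un[of I A "- A"] id_univ[of I] by (metis Compl_partition)

lemma id_empty: "is_ideal I \<Longrightarrow> {} \<in> I"
  using id_fin by blast

lemma id_finUN: assumes "is_ideal I" "finite K" shows "(\<forall>k\<in>K. f k \<in> I) \<Longrightarrow> (\<Union>k\<in>K. f k) \<in> I"
  using assms(2)
proof (induction K rule: finite_induct)
  case empty then show ?case using id_empty[OF assms(1)] by simp
next
  case (insert x F) then show ?case using id_un[OF assms(1)] by simp
qed

lemma prod_mem: "P \<in> ideal_prod I J \<longleftrightarrow> {x. sec P x \<notin> J} \<in> I"
  unfolding ideal_prod_def sec_def by simp

lemma sec_simps[simp]: "sec (A \<times> UNIV) x = (if x \<in> A then UNIV else {})"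
  "sec (UNIV \<times> B) x = B" "sec (P \<union> Q) x = sec P x \<union> sec Q x"
  "sec (\<Union>i\<in>K. F i) x = (\<Union>i\<in>K. sec (F i) x)" "sec (P \<inter> Q) x = sec P x \<inter> sec Q x"
  unfolding sec_def by auto

lemma sec_mono: "P \<subseteq> Q \<Longrightarrow> sec P x \<subseteq> sec Q x" unfolding sec_def by auto

lemma prod_ideal: assumes I: "is_ideal I" and J: "is_ideal J" shows "is_ideal (ideal_prod I J)"
  unfolding is_ideal_def
proof (intro conjI ballI allI impI)
  fix A B assume "A \<in> ideal_prod I J" "B \<in> ideal_prod I J"
  then have "{x. sec A x \<notin> J} \<union> {x. sec B x \<notin> J} \<in> I" using id_un[OF I] prod_mem by blast
  moreover have "{x. sec (A \<union> B) x \<notin> J} \<subseteq> {x. sec A x \<notin> J} \<union> {x. sec B x \<notin> J}"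
    using id_un[OF J] by auto
  ultimately show "A \<union> B \<in> ideal_prod I J" using id_sub[OF I] prod_mem by blast
next
  fix A B assume "A \<in> ideal_prod I J" "B \<subseteq> A"
  moreover have "{x. sec B x \<notin> J} \<subseteq> {x. sec A x \<notin> J}"
    using id_sub[OF J] sec_mono[OF \<open>B \<subseteq> A\<close>] by blast
  ultimately show "B \<in> ideal_prod I J" using id_sub[OF I] prod_mem by blast
next
  fix F :: "('a \<times> 'b) set" assume "finite F"
  have "sec F x \<in> J" for x
  proof -
    have "sec F x = snd ` (F \<inter> {p. fst p = x})" unfolding sec_def by force
    then show ?thesis using id_fin[OF J] \<open>finite F\<close> by simp
  qed
  then have "{x. sec F x \<notin> J} = {}" by blast
  then show "F \<in> ideal_prod I J" using prod_mem id_empty[OF I] by metis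
next
  have "{x. sec (UNIV :: ('a \<times> 'b) set) x \<notin> J} = UNIV" using id_univ[OF J] unfolding sec_def by simp
  then show "UNIV \<notin> ideal_prod I J" using prod_mem id_univ[OF I] by metis
qed

lemma min_card: assumes "W \<noteq> {}" shows "\<exists>A\<in>W. \<forall>B\<in>W. (card_of A, card_of B) \<in> ordLeq"
proof -
  obtain r where "r \<in> card_of ` W" "\<forall>r'\<in>card_of ` W. (r, r') \<in> ordLeq"
    using exists_minim_Well_order[of "card_of ` W"] assms card_of_Well_order by blast
  then show ?thesis by blast
qed

lemma img_le: "(card_of (f ` A), card_of A) \<in> ordLeq" using card_of_image by blast


lemma part3a: assumes I: "is_ideal I" and J: "is_ideal J"
  shows "minc_le (addw_fams (ideal_prod I J)) (addw_fams I)"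
  unfolding minc_le_def
proof
  fix \<A> assume A: "\<A> \<in> addw_fams I"
  let ?f = "\<lambda>A. A \<times> (UNIV :: 'b set)"
  have "?f ` \<A> \<in> addw_fams (ideal_prod I J)"
    unfolding addw_fams_def
  proof (intro CollectI conjI allI impI)
    show "?f ` \<A> \<subseteq> ideal_prod I J"
    proof
      fix P assume "P \<in> ?f ` \<A>"
      then obtain A where "A \<in> \<A>" "P = ?f A" by blast
      then have "A \<in> I" using A unfolding addw_fams_def by blast
      moreover have "{x. sec P x \<notin> J} = A" using \<open>P = ?f A\<close> id_univ[OF J] id_empty[OF J] by auto
      ultimately show "P \<in> ideal_prod I J" using prod_mem by metis
    qed
  next
    fix B' :: "nat \<Rightarrow> _" assume B': "\<forall>n. B' n \<in> ideal_prod I J"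
    define B where "B n = {x. sec (B' n) x \<notin> J}" for n
    have "\<forall>n. B n \<in> I" using B' prod_mem unfolding B_def by metis
    then obtain A where "A \<in> \<A>" and nA: "\<forall>n. \<not> A \<subseteq> B n" using A unfolding addw_fams_def by blast
    have "\<not> ?f A \<subseteq> B' n" for n
    proof
      assume sub: "?f A \<subseteq> B' n"
      obtain x where "x \<in> A" "x \<notin> B n" using nA by blast
      then have "sec (B' n) x \<in> J" unfolding B_def by blast
      moreover have "sec (B' n) x = UNIV" using sub \<open>x \<in> A\<close> unfolding sec_def by blast
      ultimately show False using id_univ[OF J] by simp
    qed
    then show "\<exists>P\<in>?f ` \<A>. \<forall>n. \<not> P \<subseteq> B' n" using \<open>A \<in> \<A>\<close> by blast
  qed
  then show "\<exists>P\<in>addw_fams (ideal_prod I J). (card_of P, card_of \<A>) \<in> ordLeq" using img_le by blast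
qed

lemma part3b: assumes I: "is_ideal I" and J: "is_ideal J"
  shows "minc_le (addw_fams (ideal_prod I J)) (addw_fams J)"
  unfolding minc_le_def
proof
  fix \<A> assume A: "\<A> \<in> addw_fams J"
  let ?f = "\<lambda>A. (UNIV :: 'a set) \<times> A"
  have "?f ` \<A> \<in> addw_fams (ideal_prod I J)"
    unfolding addw_fams_def
  proof (intro CollectI conjI allI impI)
    show "?f ` \<A> \<subseteq> ideal_prod I J"
    proof
      fix P assume "P \<in> ?f ` \<A>"
      then obtain A where "A \<in> \<A>" "P = ?f A" by blast
      then have "A \<in> J" using A unfolding addw_fams_def by blast
      then have "{x. sec P x \<notin> J} = {}" using \<open>P = ?f A\<close> by auto
      then show "P \<in> ideal_prod I J" using prod_mem id_empty[OF I] by metis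
    qed
  next
    fix B' :: "nat \<Rightarrow> _" assume B': "\<forall>n. B' n \<in> ideal_prod I J"
    have "\<exists>x. sec (B' n) x \<in> J" for n
    proof (rule ccontr)
      assume "\<not> ?thesis"
      then have "{x. sec (B' n) x \<notin> J} = UNIV" by blast
      then show False using B' prod_mem id_univ[OF I] by metis
    qed
    then obtain xs where xs: "\<And>n. sec (B' n) (xs n) \<in> J" by metis
    have h: "\<forall>B. (\<forall>n::nat. B n \<in> J) \<longrightarrow> (\<exists>A\<in>\<A>. \<forall>n. \<not> A \<subseteq> B n)" using A unfolding addw_fams_def by blast
    obtain A where "A \<in> \<A>" and nA: "\<forall>n. \<not> A \<subseteq> sec (B' n) (xs n)" using h[rule_format, of "\<lambda>n. sec (B' n) (xs n)"] xs by blast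
    have "\<not> ?f A \<subseteq> B' n" for n
      using nA[rule_format, of n] unfolding sec_def by blast
    then show "\<exists>P\<in>?f ` \<A>. \<forall>n. \<not> P \<subseteq> B' n" using \<open>A \<in> \<A>\<close> by blast
  qed
  then show "\<exists>P\<in>addw_fams (ideal_prod I J). (card_of P, card_of \<A>) \<in> ordLeq" using img_le by blast
qed


lemma part2a: assumes I: "is_ideal I" and J: "is_ideal J"
  shows "minc_le (bsigma_fams (ideal_prod I J)) (bsigma_fams I)"
  unfolding minc_le_def
proof
  fix \<E> assume E: "\<E> \<in> bsigma_fams I"
  let ?f = "\<lambda>E n. E n \<times> (UNIV :: 'b set)"
  have "?f ` \<E> \<in> bsigma_fams (ideal_prod I J)"
    unfolding bsigma_fams_def
  proof (intro CollectI conjI ballI)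
    show "?f ` \<E> \<subseteq> incM (ideal_prod I J)"
    proof
      fix P assume "P \<in> ?f ` \<E>"
      then obtain E where "E \<in> \<E>" "P = ?f E" by blast
      then have "E \<in> incM I" using E unfolding bsigma_fams_def by blast
      moreover have "{x. sec (P n) x \<notin> J} = E n" for n using \<open>P = ?f E\<close> id_univ[OF J] id_empty[OF J] by auto
      ultimately show "P \<in> incM (ideal_prod I J)" unfolding incM_def
      proof (intro CollectI conjI allI)
        fix k show "P k \<in> ideal_prod I J" using \<open>E \<in> incM I\<close> prod_mem[of "P k" I J] \<open>{x. sec (P k) x \<notin> J} = E k\<close>
          unfolding incM_def by simp
        show "P k \<subseteq> P (Suc k)" using \<open>E \<in> incM I\<close> unfolding incM_def \<open>P = ?f E\<close> by auto
      qed
    qed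
  next
    fix B' assume B': "B' \<in> incM (ideal_prod I J)"
    define B where "B n = {x. sec (B' n) x \<notin> J}" for n
    have "B \<in> incM I" unfolding incM_def
    proof (intro CollectI conjI allI)
      show "B k \<in> I" for k using B' prod_mem unfolding B_def incM_def by blast
      show "B k \<subseteq> B (Suc k)" for k
      proof
        fix x assume "x \<in> B k"
        have "sec (B' k) x \<subseteq> sec (B' (Suc k)) x" using B' sec_mono[of "B' k" "B' (Suc k)"] unfolding incM_def by blast
        then show "x \<in> B (Suc k)" using \<open>x \<in> B k\<close> id_sub[OF J, of "sec (B' (Suc k)) x" "sec (B' k) x"] unfolding B_def by blast
      qed
    qed
    then obtain E where "E \<in> \<E>" and nA: "infinite {n. \<not> E n \<subseteq> B n}" using E unfolding bsigma_fams_def by blast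
    have "{n. \<not> E n \<subseteq> B n} \<subseteq> {n. \<not> ?f E n \<subseteq> B' n}"
    proof safe
      fix n x assume "x \<in> E n" "x \<notin> B n" "?f E n \<subseteq> B' n"
      then have "sec (B' n) x \<in> J" "sec (B' n) x = UNIV" unfolding B_def sec_def by auto
      then show False using id_univ[OF J] by simp
    qed
    then have "infinite {n. \<not> ?f E n \<subseteq> B' n}" using nA finite_subset by blast
    then show "\<exists>P\<in>?f ` \<E>. infinite {n. \<not> P n \<subseteq> B' n}" using \<open>E \<in> \<E>\<close> by (intro bexI[where x="?f E"]) auto
  qed
  then show "\<exists>P\<in>bsigma_fams (ideal_prod I J). (card_of P, card_of \<E>) \<in> ordLeq" using img_le by blast
qed

lemma part2b: assumes I: "is_ideal I" and J: "is_ideal J"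
  shows "minc_le (bsigma_fams (ideal_prod I J)) (bsigma_fams J)"
  unfolding minc_le_def
proof
  fix \<E> assume E: "\<E> \<in> bsigma_fams J"
  let ?f = "\<lambda>E n. (UNIV :: 'a set) \<times> E n"
  have "?f ` \<E> \<in> bsigma_fams (ideal_prod I J)"
    unfolding bsigma_fams_def
  proof (intro CollectI conjI ballI)
    show "?f ` \<E> \<subseteq> incM (ideal_prod I J)"
    proof
      fix P assume "P \<in> ?f ` \<E>"
      then obtain E where "E \<in> \<E>" "P = ?f E" by blast
      then have "E \<in> incM J" using E unfolding bsigma_fams_def by blast
      then have "{x. sec (P n) x \<notin> J} = {}" for n using \<open>P = ?f E\<close> unfolding incM_def by simp
      then show "P \<in> incM (ideal_prod I J)" unfolding incM_def
      proof (intro CollectI conjI allI)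
        fix k show "P k \<in> ideal_prod I J" using id_empty[OF I] prod_mem[of "P k" I J] \<open>{x. sec (P k) x \<notin> J} = {}\<close>
          by simp
        show "P k \<subseteq> P (Suc k)" using \<open>E \<in> incM J\<close> unfolding incM_def \<open>P = ?f E\<close> by auto
      qed
    qed
  next
    fix B' assume B': "B' \<in> incM (ideal_prod I J)"
    have "\<exists>x. sec (B' n) x \<in> J" for n
    proof (rule ccontr)
      assume "\<not> ?thesis"
      then have "{x. sec (B' n) x \<notin> J} = UNIV" by blast
      moreover have "B' n \<in> ideal_prod I J" using B' unfolding incM_def by blast
      ultimately show False using prod_mem[of "B' n" I J] id_univ[OF I] by simp
    qed
    then obtain xs where xs: "\<And>n. sec (B' n) (xs n) \<in> J" by metis
    define C where "C n = (\<Union>m\<in>{..n}. sec (B' m) (xs m))" for n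
    have "C \<in> incM J" unfolding incM_def
    proof (intro CollectI conjI allI)
      show "C k \<in> J" for k unfolding C_def by (rule id_finUN[OF J]) (use xs in auto)
      show "C k \<subseteq> C (Suc k)" for k unfolding C_def by (intro UN_mono) auto
    qed
    then obtain E where "E \<in> \<E>" and nA: "infinite {n. \<not> E n \<subseteq> C n}" using E unfolding bsigma_fams_def by blast
    have "{n. \<not> E n \<subseteq> C n} \<subseteq> {n. \<not> ?f E n \<subseteq> B' n}"
    proof safe
      fix n y assume "y \<in> E n" "y \<notin> C n" "?f E n \<subseteq> B' n"
      then have "y \<in> sec (B' n) (xs n)" unfolding sec_def by auto
      then show False using \<open>y \<notin> C n\<close> unfolding C_def by auto
    qed
    then have "infinite {n. \<not> ?f E n \<subseteq> B' n}" using nA finite_subset by blast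
    then show "\<exists>P\<in>?f ` \<E>. infinite {n. \<not> P n \<subseteq> B' n}" using \<open>E \<in> \<E>\<close> by (intro bexI[where x="?f E"]) auto
  qed
  then show "\<exists>P\<in>bsigma_fams (ideal_prod I J). (card_of P, card_of \<E>) \<in> ordLeq" using img_le by blast
qed


lemma incM_mono: "E \<in> incM I \<Longrightarrow> m \<le> n \<Longrightarrow> E m \<subseteq> E n"
  unfolding incM_def using lift_Suc_mono_le[of E m n] by blast

lemma fin_bound: "finite (S :: nat set) \<Longrightarrow> \<exists>N. \<forall>n\<ge>N. n \<notin> S"
  using finite_nat_set_iff_bounded by (meson leD)

lemma part2c_core: fixes I :: "nat set set" and J :: "'b set set"
  assumes I: "is_ideal I" and J: "is_ideal J" and EE: "\<E>' \<in> bsigma_fams (ideal_prod I J)"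
  shows "(\<exists>\<E>\<in>bsigma_fams I. (card_of \<E>, card_of \<E>') \<in> ordLeq) \<or>
         (\<exists>\<E>\<in>bsigma_fams J. (card_of \<E>, card_of \<E>') \<in> ordLeq)"
proof (rule ccontr)
  assume neg: "\<not> ?thesis"
  define \<Psi> where "\<Psi> E' n = {x. sec (E' n) x \<notin> J}" for E' :: "nat \<Rightarrow> (nat \<times> 'b) set" and n
  define IX where "IX E' k = {p \<in> {..k} \<times> {..k}. sec (E' (snd p)) (fst p) \<in> J}" for E' :: "nat \<Rightarrow> (nat \<times> 'b) set" and k
  define T where "T E' k = (\<Union>p\<in>IX E' k. sec (E' (snd p)) (fst p))" for E' k
  have incE: "E' \<in> incM (ideal_prod I J)" if "E' \<in> \<E>'" for E' using EE that unfolding bsigma_fams_def by blast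
  have PsiM: "\<Psi> E' \<in> incM I" if "E' \<in> \<E>'" for E'
    unfolding incM_def
  proof (intro CollectI conjI allI)
    show "\<Psi> E' k \<in> I" for k using incE[OF that] prod_mem unfolding \<Psi>_def incM_def by blast
    show "\<Psi> E' k \<subseteq> \<Psi> E' (Suc k)" for k
    proof
      fix x assume "x \<in> \<Psi> E' k"
      have "sec (E' k) x \<subseteq> sec (E' (Suc k)) x" using incE[OF that] sec_mono[of "E' k" "E' (Suc k)"] unfolding incM_def by blast
      then show "x \<in> \<Psi> E' (Suc k)" using \<open>x \<in> \<Psi> E' k\<close> id_sub[OF J, of "sec (E' (Suc k)) x" "sec (E' k) x"] unfolding \<Psi>_def by blast
    qed
  qed
  have TM: "T E' \<in> incM J" for E'
    unfolding incM_def
  proof (intro CollectI conjI allI)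
    fix k
    have "finite (IX E' k)" unfolding IX_def by (rule finite_subset[of _ "{..k} \<times> {..k}"]) auto
    then show "T E' k \<in> J" unfolding T_def by (rule id_finUN[OF J]) (simp add: IX_def)
    have "IX E' k \<subseteq> IX E' (Suc k)" unfolding IX_def by auto
    then show "T E' k \<subseteq> T E' (Suc k)" unfolding T_def by (rule UN_mono) auto
  qed
  have "\<Psi> ` \<E>' \<notin> bsigma_fams I" using neg img_le by blast
  moreover have "\<Psi> ` \<E>' \<subseteq> incM I" using PsiM by blast
  ultimately obtain A where A: "A \<in> incM I" and Adom: "\<forall>E'\<in>\<E>'. finite {n. \<not> \<Psi> E' n \<subseteq> A n}"
    unfolding bsigma_fams_def by blast
  have "T ` \<E>' \<notin> bsigma_fams J" using neg img_le by blast
  moreover have "T ` \<E>' \<subseteq> incM J" using TM by blast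
  ultimately obtain C where C: "C \<in> incM J" and Cdom: "\<forall>E'\<in>\<E>'. finite {n. \<not> T E' n \<subseteq> C n}"
    unfolding bsigma_fams_def by blast
  define A' where "A' n = (A n \<times> UNIV) \<union> {(x, y). y \<in> C (max x n)}" for n
  have secA': "sec (A' n) x = (if x \<in> A n then UNIV else {}) \<union> C (max x n)" for n x
    unfolding A'_def sec_def by auto
  have "A' \<in> incM (ideal_prod I J)"
    unfolding incM_def
  proof (intro CollectI conjI allI)
    fix k
    have "{x. sec (A' k) x \<notin> J} \<subseteq> A k"
    proof
      fix x assume "x \<in> {x. sec (A' k) x \<notin> J}"
      moreover have "C (max x k) \<in> J" using C unfolding incM_def by blast
      ultimately show "x \<in> A k" using secA'[of k x] by (auto split: if_splits)
    qed
    moreover have "A k \<in> I" using A unfolding incM_def by blast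
    ultimately show "A' k \<in> ideal_prod I J" using prod_mem id_sub[OF I] by blast
    have "A k \<subseteq> A (Suc k)" using A unfolding incM_def by blast
    moreover have "C (max x k) \<subseteq> C (max x (Suc k))" for x using incM_mono[OF C] by simp
    ultimately show "A' k \<subseteq> A' (Suc k)" unfolding A'_def by auto
  qed
  then obtain E' where "E' \<in> \<E>'" and inf: "infinite {n. \<not> E' n \<subseteq> A' n}"
    using EE unfolding bsigma_fams_def by blast
  obtain N where N: "\<forall>n\<ge>N. \<Psi> E' n \<subseteq> A n" using fin_bound[OF Adom[rule_format, OF \<open>E' \<in> \<E>'\<close>]] by blast
  obtain M where M: "\<forall>n\<ge>M. T E' n \<subseteq> C n" using fin_bound[OF Cdom[rule_format, OF \<open>E' \<in> \<E>'\<close>]] by blast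
  have "{n. \<not> E' n \<subseteq> A' n} \<subseteq> {..<max N M}"
  proof
    fix n assume "n \<in> {n. \<not> E' n \<subseteq> A' n}"
    then obtain p where "p \<in> E' n" "p \<notin> A' n" by blast
    then obtain x y where xy: "(x, y) \<in> E' n" "(x, y) \<notin> A' n" by (cases p) auto
    show "n \<in> {..<max N M}"
    proof (rule ccontr)
      assume "n \<notin> {..<max N M}"
      then have "n \<ge> N" "n \<ge> M" by auto
      have "x \<notin> A n" using xy unfolding A'_def by auto
      then have "x \<notin> \<Psi> E' n" using N \<open>n \<ge> N\<close> by blast
      then have sj: "sec (E' n) x \<in> J" unfolding \<Psi>_def by blast
      let ?k = "max x n"
      have "(x, n) \<in> IX E' ?k" unfolding IX_def using sj by auto
      moreover have "y \<in> sec (E' n) x" using xy unfolding sec_def by blast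
      ultimately have "y \<in> T E' ?k" unfolding T_def by force
      moreover have "?k \<ge> M" using \<open>n \<ge> M\<close> by simp
      ultimately have "y \<in> C ?k" using M by blast
      then show False using xy unfolding A'_def by auto
    qed
  qed
  then show False using inf finite_subset by blast
qed

lemma part2c: fixes I :: "nat set set" and J :: "'b set set"
  assumes I: "is_ideal I" and J: "is_ideal J"
  shows "minc_le (bsigma_fams I) (bsigma_fams (ideal_prod I J)) \<or>
         minc_le (bsigma_fams J) (bsigma_fams (ideal_prod I J))"
proof (cases "bsigma_fams (ideal_prod I J) = {}")
  case True then show ?thesis unfolding minc_le_def by blast
next
  case False
  then obtain E0 where E0: "E0 \<in> bsigma_fams (ideal_prod I J)"
    and mn: "\<forall>B\<in>bsigma_fams (ideal_prod I J). (card_of E0, card_of B) \<in> ordLeq"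
    using min_card by blast
  from part2c_core[OF I J E0] show ?thesis
  proof
    assume "\<exists>\<E>\<in>bsigma_fams I. (card_of \<E>, card_of E0) \<in> ordLeq"
    then show ?thesis unfolding minc_le_def using mn ordLeq_transitive by blast
  next
    assume "\<exists>\<E>\<in>bsigma_fams J. (card_of \<E>, card_of E0) \<in> ordLeq"
    then show ?thesis unfolding minc_le_def using mn ordLeq_transitive by blast
  qed
qed


lemma part1a: fixes I :: "nat set set" and J :: "'b set set"
  assumes I: "is_ideal I" and J: "is_ideal J"
  shows "minc_le (bs_fams (ideal_prod I J)) (bs_fams I)"
  unfolding minc_le_def
proof
  fix \<E> assume EE: "\<E> \<in> bs_fams I"
  have IJ: "is_ideal (ideal_prod I J)" using prod_ideal[OF I J] .
  let ?f = "\<lambda>E n. E n \<times> (UNIV :: 'b set)"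
  have "?f ` \<E> \<in> bs_fams (ideal_prod I J)"
    unfolding bs_fams_def
  proof (intro CollectI conjI ballI)
    show "?f ` \<E> \<subseteq> hatP (ideal_prod I J)"
    proof
      fix P assume "P \<in> ?f ` \<E>"
      then obtain E where "E \<in> \<E>" "P = ?f E" by blast
      then have EH: "E \<in> hatP I" using EE unfolding bs_fams_def by blast
      have "{x. sec (P n) x \<notin> J} = E n" for n using \<open>P = ?f E\<close> id_univ[OF J] id_empty[OF J] by auto
      then have "P n \<in> ideal_prod I J" for n using EH prod_mem[of "P n" I J] unfolding hatP_def by simp
      moreover have "P m \<inter> P n = {}" if "m \<noteq> n" for m n
        using EH that unfolding hatP_def \<open>P = ?f E\<close> by blast
      ultimately show "P \<in> hatP (ideal_prod I J)" unfolding hatP_def by blast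
    qed
  next
    fix A' assume A': "A' \<in> partP (ideal_prod I J)"
    have A'cov: "(\<Union>n. A' n) = UNIV" and A'H: "A' \<in> hatP (ideal_prod I J)" using A' unfolding partP_def by auto
    define S where "S n = {x. sec (\<Union>k\<in>{..n}. A' k) x \<notin> J}" for n
    have SI: "S n \<in> I" for n
    proof -
      have "(\<Union>k\<in>{..n}. A' k) \<in> ideal_prod I J"
        by (rule id_finUN[OF IJ]) (use A'H in \<open>auto simp: hatP_def\<close>)
      then show ?thesis unfolding S_def using prod_mem by blast
    qed
    define a where "a x = (if \<exists>n. x \<in> S n then LEAST n. x \<in> S n else x)" for x
    define A where "A n = {x. a x = n}" for n
    have "A n \<subseteq> S n \<union> {n}" for n
    proof
      fix x assume "x \<in> A n"
      then have an: "a x = n" unfolding A_def by simp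
      show "x \<in> S n \<union> {n}"
      proof (cases "\<exists>n. x \<in> S n")
        case True
        then have "x \<in> S (LEAST n. x \<in> S n)" by (rule LeastI_ex)
        then show ?thesis using an True unfolding a_def by simp
      next
        case False then show ?thesis using an unfolding a_def by simp
      qed
    qed
    moreover have "S n \<union> {n} \<in> I" for n by (rule id_un[OF I SI id_fin[OF I]]) simp
    ultimately have AI: "A n \<in> I" for n using id_sub[OF I] by blast
    have "A \<in> partP I" unfolding partP_def hatP_def
    proof (intro CollectI conjI allI impI)
      show "A n \<in> I" for n by (rule AI)
      show "A m \<inter> A n = {}" if "m \<noteq> n" for m n using that unfolding A_def by auto
      show "(\<Union>n. A n) = UNIV"
      proof (rule set_eqI)
        fix x have "x \<in> A (a x)" unfolding A_def by simp
        then show "x \<in> (\<Union>n. A n) \<longleftrightarrow> x \<in> UNIV" by blast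
      qed
    qed
    then obtain E where "E \<in> \<E>" and X: "(\<Union>n. A (Suc n) \<inter> (\<Union>i\<le>n. E i)) \<notin> I"
      using EE unfolding bs_fams_def by blast
    define X' where "X' = (\<Union>n. A' (Suc n) \<inter> (\<Union>i\<le>n. ?f E i))"
    have "(\<Union>n. A (Suc n) \<inter> (\<Union>i\<le>n. E i)) \<subseteq> {x. sec X' x \<notin> J}"
    proof
      fix x assume "x \<in> (\<Union>n. A (Suc n) \<inter> (\<Union>i\<le>n. E i))"
      then obtain n i where "x \<in> A (Suc n)" "i \<le> n" "x \<in> E i" by blast
      then have ax: "a x = Suc n" unfolding A_def by simp
      have "x \<notin> S i"
      proof
        assume "x \<in> S i"
        then have "(LEAST n. x \<in> S n) \<le> i" by (rule Least_le)
        moreover have "a x = (LEAST n. x \<in> S n)" using \<open>x \<in> S i\<close> unfolding a_def by auto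
        ultimately show False using ax \<open>i \<le> n\<close> by simp
      qed
      then have "sec (\<Union>k\<in>{..i}. A' k) x \<in> J" unfolding S_def by blast
      then have c: "- sec (\<Union>k\<in>{..i}. A' k) x \<notin> J" by (rule id_compl[OF J])
      have "- sec (\<Union>k\<in>{..i}. A' k) x \<subseteq> sec X' x"
      proof
        fix y assume "y \<in> - sec (\<Union>k\<in>{..i}. A' k) x"
        then have nk: "\<forall>k\<le>i. (x, y) \<notin> A' k" unfolding sec_def by auto
        obtain m where m: "(x, y) \<in> A' m" using A'cov by blast
        have "\<not> m \<le> i" using nk m by blast
        define m' where "m' = m - 1"
        have "m = Suc m'" "i \<le> m'" using \<open>\<not> m \<le> i\<close> unfolding m'_def by auto
        then have "(x, y) \<in> A' (Suc m') \<inter> (\<Union>i\<le>m'. ?f E i)" using m \<open>x \<in> E i\<close> \<open>i \<le> m'\<close> by blast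
        then show "y \<in> sec X' x" unfolding X'_def sec_def by blast
      qed
      then show "x \<in> {x. sec X' x \<notin> J}" using id_sup[OF J c] by blast
    qed
    then have "{x. sec X' x \<notin> J} \<notin> I" using id_sup[OF I X] by blast
    then have "X' \<notin> ideal_prod I J" using prod_mem by blast
    then have X'': "(\<Union>n. A' (Suc n) \<inter> (\<Union>i\<le>n. ?f E i)) \<notin> ideal_prod I J" unfolding X'_def .
    show "\<exists>P\<in>?f ` \<E>. (\<Union>n. A' (Suc n) \<inter> (\<Union>i\<le>n. P i)) \<notin> ideal_prod I J"
    proof (rule bexI[where x="?f E"])
      show "(\<Union>n. A' (Suc n) \<inter> (\<Union>i\<le>n. ?f E i)) \<notin> ideal_prod I J" by (rule X'')
      show "?f E \<in> ?f ` \<E>" using \<open>E \<in> \<E>\<close> by (rule imageI)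
    qed
  qed
  then show "\<exists>P\<in>bs_fams (ideal_prod I J). (card_of P, card_of \<E>) \<in> ordLeq" using img_le by blast
qed

lemma part1b: fixes I :: "nat set set" and J :: "'b set set"
  assumes I: "is_ideal I" and J: "is_ideal J"
  shows "minc_le (bs_fams I) (bs_fams (ideal_prod I J))"
  unfolding minc_le_def
proof
  fix \<E>' assume EE: "\<E>' \<in> bs_fams (ideal_prod I J)"
  have IJ: "is_ideal (ideal_prod I J)" using prod_ideal[OF I J] .
  define D where "D E' n = {x. sec (\<Union>i\<in>{..n}. E' i) x \<notin> J}" for E' :: "nat \<Rightarrow> (nat \<times> 'b) set" and n
  define \<Phi> where "\<Phi> E' n = {x. x \<in> D E' n \<and> (\<forall>m<n. x \<notin> D E' m)}" for E' n
  have "\<Phi> ` \<E>' \<in> bs_fams I"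
    unfolding bs_fams_def
  proof (intro CollectI conjI ballI)
    show "\<Phi> ` \<E>' \<subseteq> hatP I"
    proof
      fix P assume "P \<in> \<Phi> ` \<E>'"
      then obtain E' where "E' \<in> \<E>'" "P = \<Phi> E'" by blast
      then have EH: "E' \<in> hatP (ideal_prod I J)" using EE unfolding bs_fams_def by blast
      have "D E' n \<in> I" for n
      proof -
        have "(\<Union>k\<in>{..n}. E' k) \<in> ideal_prod I J"
          by (rule id_finUN[OF IJ]) (use EH in \<open>auto simp: hatP_def\<close>)
        then show ?thesis unfolding D_def using prod_mem by blast
      qed
      moreover have "P n \<subseteq> D E' n" for n unfolding \<open>P = \<Phi> E'\<close> \<Phi>_def by auto
      ultimately have "P n \<in> I" for n using id_sub[OF I] by metis
      moreover have "P m \<inter> P n = {}" if "m \<noteq> n" for m n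
      proof -
        have "\<And>m n. m < n \<Longrightarrow> P m \<inter> P n = {}"
           unfolding \<open>P = \<Phi> E'\<close> \<Phi>_def by auto
        show ?thesis
        proof (cases "m < n")
          case True then show ?thesis using \<open>\<And>m n. m < n \<Longrightarrow> P m \<inter> P n = {}\<close> by blast
        next
          case False then have "n < m" using \<open>m \<noteq> n\<close> by simp
          then show ?thesis using \<open>\<And>m n. m < n \<Longrightarrow> P m \<inter> P n = {}\<close>[of n m] by blast
        qed
      qed
      ultimately show "P \<in> hatP I" unfolding hatP_def by blast
    qed
  next
    fix A assume A: "A \<in> partP I"
    have Acov: "(\<Union>n. A n) = UNIV" and AH: "A \<in> hatP I" using A unfolding partP_def by auto
    define A' where "A' n = A n \<times> (UNIV :: 'b set)" for n
    have "A' \<in> partP (ideal_prod I J)"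
    proof -
      have "{x. sec (A' n) x \<notin> J} = A n" for n unfolding A'_def using id_univ[OF J] id_empty[OF J] by auto
      then have "A' n \<in> ideal_prod I J" for n using AH prod_mem[of "A' n" I J] unfolding hatP_def by simp
      moreover have "A' m \<inter> A' n = {}" if "m \<noteq> n" for m n
        using AH that unfolding hatP_def A'_def by blast
      moreover have "(\<Union>n. A' n) = UNIV" using Acov unfolding A'_def by auto
      ultimately show ?thesis unfolding partP_def hatP_def by blast
    qed
    then obtain E' where "E' \<in> \<E>'" and X': "(\<Union>n. A' (Suc n) \<inter> (\<Union>i\<le>n. E' i)) \<notin> ideal_prod I J"
      using EE unfolding bs_fams_def by blast
    define X' where "X' = (\<Union>n. A' (Suc n) \<inter> (\<Union>i\<le>n. E' i))"
    have Xs: "{x. sec X' x \<notin> J} \<notin> I" using X' prod_mem unfolding X'_def by blast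
    have "{x. sec X' x \<notin> J} \<subseteq> (\<Union>n. A (Suc n) \<inter> (\<Union>i\<le>n. \<Phi> E' i))"
    proof
      fix x assume "x \<in> {x. sec X' x \<notin> J}"
      then have nJ: "sec X' x \<notin> J" by blast
      then have "sec X' x \<noteq> {}" using id_empty[OF J] by metis
      then obtain y where "y \<in> sec X' x" by blast
      then have "(x, y) \<in> X'" unfolding sec_def by simp
      then obtain n where "(x, y) \<in> A' (Suc n)" unfolding X'_def by blast
      then have xn: "x \<in> A (Suc n)" unfolding A'_def by simp
      have "sec X' x \<subseteq> sec (\<Union>i\<in>{..n}. E' i) x"
      proof
        fix y' assume "y' \<in> sec X' x"
        then have "(x, y') \<in> X'" unfolding sec_def by simp
        then obtain n' where "(x, y') \<in> A' (Suc n')" "(x, y') \<in> (\<Union>i\<le>n'. E' i)"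
          unfolding X'_def by blast
        then have "x \<in> A (Suc n')" "(x, y') \<in> (\<Union>i\<le>n'. E' i)" unfolding A'_def by auto
        moreover have "n' = n"
        proof (rule ccontr)
          assume "n' \<noteq> n"
          then have "A (Suc n') \<inter> A (Suc n) = {}" using AH unfolding hatP_def by blast
          then show False using xn \<open>x \<in> A (Suc n')\<close> by blast
        qed
        ultimately show "y' \<in> sec (\<Union>i\<in>{..n}. E' i) x" unfolding sec_def by auto
      qed
      then have "sec (\<Union>i\<in>{..n}. E' i) x \<notin> J" by (rule id_sup[OF J nJ])
      then have "x \<in> D E' n" unfolding D_def by simp
      define m where "m = (LEAST m. x \<in> D E' m)"
      have "x \<in> D E' m" unfolding m_def by (rule LeastI[of _ n]) fact
      moreover have "\<forall>k<m. x \<notin> D E' k" unfolding m_def using not_less_Least by blast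
      moreover have "m \<le> n" unfolding m_def by (rule Least_le) fact
      ultimately have "x \<in> A (Suc n) \<inter> (\<Union>i\<le>n. \<Phi> E' i)" using xn unfolding \<Phi>_def by auto
      then show "x \<in> (\<Union>n. A (Suc n) \<inter> (\<Union>i\<le>n. \<Phi> E' i))" by blast
    qed
    then have "(\<Union>n. A (Suc n) \<inter> (\<Union>i\<le>n. \<Phi> E' i)) \<notin> I" using id_sup[OF I Xs] by blast
    then show "\<exists>P\<in>\<Phi> ` \<E>'. (\<Union>n. A (Suc n) \<inter> (\<Union>i\<le>n. P i)) \<notin> I"
      using \<open>E' \<in> \<E>'\<close> by blast
  qed
  then show "\<exists>P\<in>bs_fams I. (card_of P, card_of \<E>') \<in> ordLeq" using img_le by blast
qed

theorem theorem5p13: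
  fixes I J :: "nat set set"
  assumes "is_ideal I" and "is_ideal J"
  shows "minc_eq (bs_fams (ideal_prod I J)) (bs_fams I) \<and>
         (minc_le (bsigma_fams (ideal_prod I J)) (bsigma_fams I) \<and>
         minc_le (bsigma_fams (ideal_prod I J)) (bsigma_fams J) \<and>
         (minc_le (bsigma_fams I) (bsigma_fams (ideal_prod I J)) \<or>
          minc_le (bsigma_fams J) (bsigma_fams (ideal_prod I J)))) \<and>
         (minc_le (addw_fams (ideal_prod I J)) (addw_fams I) \<and>
         minc_le (addw_fams (ideal_prod I J)) (addw_fams J))"
  unfolding minc_eq_def
  using part1a[OF assms] part1b[OF assms] part2a[OF assms] part2b[OF assms] part2c[OF assms]
    part3a[OF assms] part3b[OF assms] by blast

end
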